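(* Let $V$ be a real Hilbert space, $\mathcal D$ a dictionary, $V_n\subset V$ a subspace of dimension $n$ with orthonormal basis $\Phi=(\phi_1,\dots,\phi_n)$, and $\kappa\in(0,1)$. Let $(W_m)_{m\ge0}$ be generated by the collective OMP algorithm with parameter $\kappa$. Then for every $\Psi=(\psi_1,\dots,\psi_n)\in V^n$, $$r_m\le4\frac{\|\Psi\|_{\ell^1(\mathcal D)}^2}{\kappa^2}(m+1)^{-1}+\|\Phi-\Psi\|^2\qquad\text{for all }m\ge1,$$ where $\|\Phi-\Psi\|^2=\sum_{i=1}^n\|\phi_i-\psi_i\|^2$.
   Context: A dictionary is a set $\mathcal D\subset V$ of elements with $\|\omega\|=1$ for all $\omega\in\mathcal D$ whose finite linear combinations are dense in $V$. Collective OMP: $W_0=\{0\}$; for $k\ge1$, choose $\omega_k\in\mathcal D$ with $$\sum_{i=1}^n|\langle\phi_i-P_{W_{k-1}}\phi_i,\omega_k\rangle|^2\ge\kappa^2\sup_{\omega\in\mathcal D}\sum_{i=1}^n|\langle\phi_i-P_{W_{k-1}}\phi_i,\omega\rangle|^2,$$ and set $W_k=\operatorname{span}\{\omega_1,\dots,\omega_k\}$ ($P_X$ is the orthogonal projection onto $X$). The residual is $r_m=\sum_{i=1}^n\|\phi_i-P_{W_m}\phi_i\|^2$. For $\Psi\in V^n$, $\|\Psi\|_{\ell^1(\mathcal D)}=\inf\{\sum_{\omega\in\mathcal D}\|c_\omega\|_2:\psi_i=\sum_{\omega\in\mathcal D}c_{\omega,i}\,\omega,\ i=1,\dots,n\}$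 with $c_\omega\in\mathbb R^n$ (countably many nonzero; infimum of the empty set is $+\infty$). *)

theory Defs
  imports "HOL-Analysis.Analysis"
begin

definition orth_proj :: "'a::real_inner set \<Rightarrow> 'a \<Rightarrow> 'a" where
  "orth_proj X x = (THE p. p \<in> X \<and> (\<forall>w\<in>X. inner (x - p) w = 0))"

definition dictionary :: "'a::real_normed_vector set \<Rightarrow> bool" where
  "dictionary D \<longleftrightarrow> (\<forall>w\<in>D. norm w = 1) \<and> closure (span D) = UNIV"

definition omp_space :: "(nat \<Rightarrow> 'a::real_vector) \<Rightarrow> nat \<Rightarrow> 'a set" where
  "omp_space om k = span (om ` {1..k})"

definition collective_omp ::
  "'a::real_inner set \<Rightarrow> real \<Rightarrow> nat \<Rightarrow> (nat \<Rightarrow> 'a) \<Rightarrow> (nat \<Rightarrow> 'a) \<Rightarrow> bool" where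
  "collective_omp D \<kappa> n phi om \<longleftrightarrow>
     (\<forall>k\<ge>1. om k \<in> D \<and>
        (\<Sum>i<n. (inner (phi i - orth_proj (omp_space om (k-1)) (phi i)) (om k))\<^sup>2)
          \<ge> \<kappa>\<^sup>2 * (SUP w\<in>D. \<Sum>i<n. (inner (phi i - orth_proj (omp_space om (k-1)) (phi i)) w)\<^sup>2))"

definition omp_residual :: "nat \<Rightarrow> (nat \<Rightarrow> 'a::real_inner) \<Rightarrow> (nat \<Rightarrow> 'a) \<Rightarrow> nat \<Rightarrow> real" where
  "omp_residual n phi om m = (\<Sum>i<n. (norm (phi i - orth_proj (omp_space om m) (phi i)))\<^sup>2)"

text \<open>The l1(D) norm of psi_0..psi_{n-1}: infimum of sum over D of the Euclidean norms of the
  coefficient vectors c_w in R^n, over all representations psi_i = sum_w c_{w,i} w with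
  countably many nonzero c_w (Inf of the empty set is top).\<close>
definition l1_dict_norm :: "'a::real_normed_vector set \<Rightarrow> nat \<Rightarrow> (nat \<Rightarrow> 'a) \<Rightarrow> ennreal" where
  "l1_dict_norm D n psi = Inf { (\<Sum>\<^sub>\<infinity>w\<in>D. ennreal (sqrt (\<Sum>i<n. (c w i)\<^sup>2))) | c.
       countable {w\<in>D. \<exists>i<n. c w i \<noteq> 0} \<and>
       (\<forall>i<n. ((\<lambda>w. c w i *\<^sub>R w) has_sum psi i) D) }"

end

theory Submission
  imports Defs
begin


lemma seq_step:
  fixes A x y t :: real
  assumes A: "A \<ge> 0" and st: "x > 0 \<longrightarrow> A * y \<le> A * x - x\<^sup>2" and mono: "y \<le> x"
    and xt: "x \<le> t" and tA: "2 * t \<le> A"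
  shows "A * y \<le> A * t - t\<^sup>2 \<or> y \<le> 0"
proof (cases "x > 0")
  case False
  then show ?thesis using mono by simp
next
  case True
  have "t - x \<ge> 0" using xt by simp
  moreover have "A - t - x \<ge> 0" using xt tA by simp
  ultimately have "(t - x) * (A - t - x) \<ge> 0" by (rule mult_nonneg_nonneg)
  moreover have "(A * t - t\<^sup>2) - (A * x - x\<^sup>2) = (t - x) * (A - t - x)"
    by (simp add: algebra_simps power2_eq_square)
  ultimately have "A * x - x\<^sup>2 \<le> A * t - t\<^sup>2" by simp
  then show ?thesis using st True by simp
qed

lemma seq_bound:
  fixes a :: "nat \<Rightarrow> real" and A :: real
  assumes A: "A \<ge> 0"
    and mono: "\<And>k. a (Suc k) \<le> a k"
    and step: "\<And>k. a k > 0 \<Longrightarrow> A * a (Suc k) \<le> A * a k - (a k)\<^sup>2"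
  shows "a (Suc m) * (real m + 2) \<le> A"
proof (induction m)
  case 0
  show ?case
  proof (cases "a 0 > 0")
    case False
    then have "a 1 \<le> 0" using mono[of 0] by simp
    then show ?thesis using A by simp
  next
    case True
    have h: "A * a 1 \<le> A * a 0 - (a 0)\<^sup>2" using step[OF True] by simp
    have "0 \<le> (a 0 - A/2)\<^sup>2" by simp
    then have "A * a 0 - (a 0)\<^sup>2 \<le> A * (A/4)" by (simp add: power2_eq_square algebra_simps)
    then have h2: "A * a 1 \<le> A * (A/4)" using h by simp
    have "A > 0"
    proof (rule ccontr)
      assume "\<not> A > 0" then have "A = 0" using A by simp
      then show False using h True by simp
    qed
    then have "a 1 \<le> A/4" using h2 by (simp add: mult_le_cancel_left_pos)
    then show ?thesis using A by simp
  qed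
next
  case (Suc m)
  define t where "t = A / (real m + 2)"
  have xt: "a (Suc m) \<le> t" using Suc.IH unfolding t_def by (simp add: field_simps)
  have tA: "2 * t \<le> A" unfolding t_def using A by (simp add: field_simps)
  let ?x = "a (Suc m)" and ?y = "a (Suc (Suc m))"
  show ?case
  proof (cases "?y > 0")
    case False
    then have "?y * (real (Suc m) + 2) \<le> 0" by (intro mult_nonpos_nonneg) auto
    then show ?thesis using A by linarith
  next
    case True
    have xp: "?x > 0" using True mono[of "Suc m"] by simp
    have st: "A * ?y \<le> A * ?x - ?x\<^sup>2" using step[OF xp] .
    have "A > 0"
    proof (rule ccontr)
      assume "\<not> A > 0" then have "A = 0" using A by simp
      then show False using st xp by simp
    qed
    have "A * ?y \<le> A * t - t\<^sup>2 \<or> ?y \<le> 0"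
      using seq_step[OF A, of ?x ?y t] st mono[of "Suc m"] xt tA by blast
    then have h: "A * ?y \<le> A * t - t\<^sup>2" using True by simp
    have "A * t - t\<^sup>2 = A * (A * (real m + 1) / (real m + 2)\<^sup>2)"
    proof -
      have d: "real m + 2 > 0" by simp
      have g: "\<And>d::real. d > 0 \<Longrightarrow> A*(A/d) - (A/d)\<^sup>2 = A*(A*(d-1)/d\<^sup>2)"
        by (simp add: field_simps power2_eq_square)
      show ?thesis unfolding t_def using g[OF d] by simp
    qed
    then have "A * ?y \<le> A * (A * (real m + 1) / (real m + 2)\<^sup>2)" using h by simp
    then have y: "?y \<le> A * (real m + 1) / (real m + 2)\<^sup>2"
      using \<open>A > 0\<close> mult_le_cancel_left_pos[of A ?y "A * (real m + 1) / (real m + 2)\<^sup>2"]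
      by (simp only: times_divide_eq_right)
    have "?y * (real m + 3) \<le> A * (real m + 1) / (real m + 2)\<^sup>2 * (real m + 3)"
      using y by (rule mult_right_mono) simp
    also have "\<dots> = A * (((real m + 1) * (real m + 3)) / (real m + 2)\<^sup>2)" by simp
    also have "\<dots> \<le> A * 1"
    proof (rule mult_left_mono[OF _ A])
      have "(real m + 1) * (real m + 3) \<le> (real m + 2)\<^sup>2" by (simp add: power2_eq_square algebra_simps)
      then show "((real m + 1) * (real m + 3)) / (real m + 2)\<^sup>2 \<le> 1" by simp
    qed
    finally show ?thesis by (simp add: add.commute)
  qed
qed



lemma orth_span:
  fixes v :: "'a::real_inner"
  assumes "\<And>y. y \<in> T \<Longrightarrow> inner v y = 0" "z \<in> span T"
  shows "inner v z = 0"
  using orthogonal_to_span[of z T v] assms unfolding orthogonal_def by blast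

lemma proj_exists:
  fixes S :: "'a::real_inner set"
  assumes "finite S"
  shows "\<forall>x. \<exists>p\<in>span S. \<forall>w\<in>span S. inner (x - p) w = 0"
  using assms
proof (induction S rule: finite_induct)
  case empty
  show ?case
  proof
    fix x :: 'a
    have "0 \<in> span ({}::'a set)" by (rule span_zero)
    moreover have "\<forall>w\<in>span {}. inner (x - 0) w = 0" by simp
    ultimately show "\<exists>p\<in>span {}. \<forall>w\<in>span {}. inner (x - p) w = 0" by blast
  qed
next
  case (insert a S)
  obtain pa where pa: "pa \<in> span S" "\<forall>w\<in>span S. inner (a - pa) w = 0"
    using insert.IH[THEN spec, of a] by (elim bexE, simp)
  define u where "u = a - pa"
  show ?case
  proof
    fix x
    obtain px where px: "px \<in> span S" "\<forall>w\<in>span S. inner (x - px) w = 0"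
      using insert.IH[THEN spec, of x] by (elim bexE, simp)
    show "\<exists>p\<in>span (insert a S). \<forall>w\<in>span (insert a S). inner (x - p) w = 0"
    proof (cases "u = 0")
      case True
      then have "a \<in> span S" using pa u_def by simp
      then have "span (insert a S) = span S" by (simp add: span_redundant)
      then show ?thesis using px by (intro bexI[of _ px], simp_all)
    next
      case False
      define p where "p = px + (inner x u / inner u u) *\<^sub>R u"
      have uS: "\<forall>w\<in>span S. inner u w = 0" using pa u_def by simp
      have sub: "span S \<subseteq> span (insert a S)" by (rule span_mono) auto
      have "a \<in> span (insert a S)" by (simp add: span_base)
      then have "u \<in> span (insert a S)" unfolding u_def
        using pa(1) sub span_diff by blast
      moreover have "px \<in> span (insert a S)"
        using px(1) sub by blast
      ultimately have pin: "p \<in> span (insert a S)" unfolding p_def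
        by (simp add: span_add span_scale)
      have uu: "inner u u \<noteq> 0" using False by simp
      have pxu: "inner px u = 0" using uS px(1) by (simp add: inner_commute)
      have ortS: "inner (x - p) y = 0" if "y \<in> span S" for y
      proof -
        have "inner (x - p) y = inner (x - px) y - (inner x u / inner u u) * inner u y"
          unfolding p_def by (simp add: inner_diff_left inner_add_left algebra_simps)
        then show ?thesis using px(2) uS that by simp
      qed
      have ortu: "inner (x - p) u = 0"
      proof -
        have "inner (x - p) u = inner x u - inner px u - (inner x u / inner u u) * inner u u"
          unfolding p_def by (simp add: inner_diff_left inner_add_left algebra_simps)
        then show ?thesis using pxu uu by simp
      qed
      have orta: "inner (x - p) a = 0"
      proof -
        have "a = u + pa" using u_def by simp
        then have "inner (x - p) a = inner (x - p) u + inner (x - p) pa"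
          by (simp add: inner_add_right)
        then show ?thesis using ortu ortS pa(1) by simp
      qed
      have "inner (x - p) w = 0" if "w \<in> span (insert a S)" for w
        apply (rule orth_span[OF _ that])
        using orta ortS span_base by blast
      then show ?thesis using pin by blast
    qed
  qed
qed

lemma proj_props:
  fixes S :: "'a::real_inner set"
  assumes "finite S"
  shows "orth_proj (span S) x \<in> span S \<and> (\<forall>w\<in>span S. inner (x - orth_proj (span S) x) w = 0)"
proof -
  obtain p where p: "p \<in> span S" "\<forall>w\<in>span S. inner (x - p) w = 0"
    using proj_exists[OF assms] by blast
  have uniq: "q = p" if q: "q \<in> span S" "\<forall>w\<in>span S. inner (x - q) w = 0" for q
  proof -
    have d: "p - q \<in> span S" by (rule span_diff[OF p(1) q(1)])
    have e1: "inner (x - q) (p - q) = 0" using q(2) d by blast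
    have e2: "inner (x - p) (p - q) = 0" using p(2) d by blast
    have "inner (p - q) (p - q) = inner (x - q) (p - q) - inner (x - p) (p - q)"
      by (simp add: inner_diff_left)
    then have "inner (p - q) (p - q) = 0" using e1 e2 by simp
    then show ?thesis by simp
  qed
  have "orth_proj (span S) x = p"
    unfolding orth_proj_def
    apply (rule the_equality)
    using p apply blast
    using uniq by blast
  then show ?thesis using p by simp
qed

lemma best_approx:
  fixes S :: "'a::real_inner set"
  assumes "finite S" "y \<in> span S"
  shows "(norm (x - orth_proj (span S) x))\<^sup>2 \<le> (norm (x - y))\<^sup>2"
proof -
  let ?p = "orth_proj (span S) x"
  have pp: "?p \<in> span S" "\<forall>w\<in>span S. inner (x - ?p) w = 0" using proj_props[OF assms(1)] by auto
  have "?p - y \<in> span S" using pp assms by (simp add: span_diff)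
  then have o: "inner (x - ?p) (?p - y) = 0" using pp by simp
  have "x - y = (x - ?p) + (?p - y)" by simp
  then have "(norm (x - y))\<^sup>2 = (norm (x - ?p))\<^sup>2 + (norm (?p - y))\<^sup>2"
    by (metis o norm_add_Pythagorean orthogonal_def)
  then show ?thesis by simp
qed


lemma finite_omp_space: "omp_space om k = span (om ` {1..k})" "finite (om ` {1..k})"
  by (simp_all add: omp_space_def)

lemma omp_space_mono: "omp_space om k \<subseteq> omp_space om (Suc k)"
  unfolding omp_space_def by (rule span_mono) auto

lemma omp_space_new: "om (Suc k) \<in> omp_space om (Suc k)"
  unfolding omp_space_def by (rule span_base) auto

lemma norm_sub_unit:
  fixes e w :: "'a::real_inner"
  assumes "norm w = 1"
  shows "(norm (e - inner e w *\<^sub>R w))\<^sup>2 = (norm e)\<^sup>2 - (inner e w)\<^sup>2"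
proof -
  have "inner w w = (norm w)\<^sup>2" by (simp add: power2_norm_eq_inner)
  then have ww: "inner w w = 1" using assms by simp
  have "(norm (e - inner e w *\<^sub>R w))\<^sup>2 = inner (e - inner e w *\<^sub>R w) (e - inner e w *\<^sub>R w)"
    by (simp add: power2_norm_eq_inner)
  also have "\<dots> = inner e e - 2 * (inner e w) * (inner e w) + (inner e w) * (inner e w) * inner w w"
    by (simp add: inner_diff_left inner_diff_right inner_commute algebra_simps)
  also have "\<dots> = (norm e)\<^sup>2 - (inner e w)\<^sup>2"
  proof -
    have "inner e e = (norm e)\<^sup>2" by (simp add: power2_norm_eq_inner)
    then show ?thesis using ww by (simp add: power2_eq_square)
  qed
  finally show ?thesis .
qed

lemma omp_dec:
  fixes D :: "'a::real_inner set"
  assumes dict: "dictionary D" and omp: "collective_omp D \<kappa> n phi om"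
  shows "omp_residual n phi om (Suc k) \<le> omp_residual n phi om k
     - \<kappa>\<^sup>2 * (SUP w\<in>D. \<Sum>i<n. (inner (phi i - orth_proj (omp_space om k) (phi i)) w)\<^sup>2)"
proof -
  let ?w = "om (Suc k)"
  have wD: "?w \<in> D" and sel: "(\<Sum>i<n. (inner (phi i - orth_proj (omp_space om k) (phi i)) ?w)\<^sup>2)
     \<ge> \<kappa>\<^sup>2 * (SUP w\<in>D. \<Sum>i<n. (inner (phi i - orth_proj (omp_space om k) (phi i)) w)\<^sup>2)"
    using omp unfolding collective_omp_def by (erule_tac x="Suc k" in allE, simp)+
  have nw: "norm ?w = 1" using dict wD unfolding dictionary_def by blast
  have each: "(norm (phi i - orth_proj (omp_space om (Suc k)) (phi i)))\<^sup>2
      \<le> (norm (phi i - orth_proj (omp_space om k) (phi i)))\<^sup>2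
         - (inner (phi i - orth_proj (omp_space om k) (phi i)) ?w)\<^sup>2" for i
  proof -
    let ?p = "orth_proj (omp_space om k) (phi i)"
    let ?e = "phi i - ?p"
    let ?y = "?p + inner ?e ?w *\<^sub>R ?w"
    have "?p \<in> omp_space om k" using proj_props[of "om ` {1..k}" "phi i"] by (simp add: omp_space_def)
    then have "?p \<in> omp_space om (Suc k)" using omp_space_mono by blast
    then have "?y \<in> omp_space om (Suc k)" using omp_space_new
      unfolding omp_space_def by (intro span_add span_scale)
    then have "(norm (phi i - orth_proj (omp_space om (Suc k)) (phi i)))\<^sup>2 \<le> (norm (phi i - ?y))\<^sup>2"
      unfolding omp_space_def by (intro best_approx) auto
    also have "phi i - ?y = ?e - inner ?e ?w *\<^sub>R ?w" by simp
    also have "(norm (?e - inner ?e ?w *\<^sub>R ?w))\<^sup>2 = (norm ?e)\<^sup>2 - (inner ?e ?w)\<^sup>2"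
      by (rule norm_sub_unit[OF nw])
    finally show ?thesis .
  qed
  have "omp_residual n phi om (Suc k) \<le> (\<Sum>i<n. (norm (phi i - orth_proj (omp_space om k) (phi i)))\<^sup>2
         - (inner (phi i - orth_proj (omp_space om k) (phi i)) ?w)\<^sup>2)"
    unfolding omp_residual_def by (rule sum_mono) (rule each)
  also have "\<dots> = omp_residual n phi om k - (\<Sum>i<n. (inner (phi i - orth_proj (omp_space om k) (phi i)) ?w)\<^sup>2)"
    unfolding omp_residual_def by (simp add: sum_subtractf)
  finally show ?thesis using sel by linarith
qed



lemma has_sum_sum_fin:
  fixes f :: "'i \<Rightarrow> 'b \<Rightarrow> real"
  assumes "finite I" "\<And>i. i \<in> I \<Longrightarrow> (f i has_sum s i) A"
  shows "((\<lambda>x. \<Sum>i\<in>I. f i x) has_sum (\<Sum>i\<in>I. s i)) A"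
  using assms
proof (induction I rule: finite_induct)
  case empty
  then show ?case by simp
next
  case (insert j I)
  have "((\<lambda>x. f j x + (\<Sum>i\<in>I. f i x)) has_sum (s j + (\<Sum>i\<in>I. s i))) A"
    by (rule has_sum_add) (use insert in auto)
  then show ?case using insert by simp
qed

lemma inner_sq_le:
  fixes e w :: "'a::real_inner"
  assumes "norm w = 1"
  shows "(inner e w)\<^sup>2 \<le> (norm e)\<^sup>2"
proof -
  have "\<bar>inner e w\<bar> \<le> norm e * norm w" by (rule Cauchy_Schwarz_ineq2)
  then have "\<bar>inner e w\<bar> \<le> \<bar>norm e\<bar>" using assms by simp
  then show ?thesis using abs_le_square_iff[of "inner e w" "norm e"] by simp
qed

lemma sup_bdd:
  fixes D :: "'a::real_inner set"
  assumes dict: "dictionary D"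
  shows "bdd_above ((\<lambda>w. \<Sum>i<n. (inner (e i) w)\<^sup>2) ` D)"
proof (rule bdd_aboveI2)
  fix w assume "w \<in> D"
  then have "norm w = 1" using dict unfolding dictionary_def by blast
  then show "(\<Sum>i<n. (inner (e i) w)\<^sup>2) \<le> (\<Sum>i<n. (norm (e i))\<^sup>2)"
    by (intro sum_mono inner_sq_le)
qed

lemma two_inner_le:
  fixes a b :: "'a::real_inner"
  shows "2 * inner a b \<le> (norm a)\<^sup>2 + (norm b)\<^sup>2"
proof -
  have "0 \<le> (norm (a - b))\<^sup>2" by simp
  also have "(norm (a - b))\<^sup>2 = (norm a)\<^sup>2 + (norm b)\<^sup>2 - 2 * inner a b"
    by (simp add: power2_norm_eq_inner inner_diff_left inner_diff_right inner_commute)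
  finally show ?thesis by simp
qed

lemma lin_aux: "(a::real) \<le> (a + b) / 2 + t \<Longrightarrow> t \<le> c \<Longrightarrow> a - b \<le> 2 * c"
  by (simp add: field_simps)

lemma key:
  fixes D :: "'a::real_inner set" and e phi psi :: "nat \<Rightarrow> 'a" and c :: "'a \<Rightarrow> nat \<Rightarrow> real"
  assumes dict: "dictionary D" and Dne: "D \<noteq> {}"
    and orth: "\<And>i. i < n \<Longrightarrow> inner (e i) (phi i) = (norm (e i))\<^sup>2"
    and rep: "\<And>i. i < n \<Longrightarrow> ((\<lambda>w. c w i *\<^sub>R w) has_sum psi i) D"
    and cM: "(\<Sum>\<^sub>\<infinity>w\<in>D. ennreal (sqrt (\<Sum>i<n. (c w i)\<^sup>2))) \<le> ennreal M" and M: "M \<ge> 0"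
  shows "(\<Sum>i<n. (norm (e i))\<^sup>2) - (\<Sum>i<n. (norm (phi i - psi i))\<^sup>2)
          \<le> 2 * M * sqrt (SUP w\<in>D. \<Sum>i<n. (inner (e i) w)\<^sup>2)"
proof -
  define S where "S = (SUP w\<in>D. \<Sum>i<n. (inner (e i) w)\<^sup>2)"
  define L where "L w = sqrt (\<Sum>i<n. (c w i)\<^sup>2)" for w
  define g where "g w = (\<Sum>i<n. c w i * inner (e i) w)" for w
  define T where "T = (\<Sum>i<n. inner (e i) (psi i))"
  have hs: "((\<lambda>w. inner (e i) (c w i *\<^sub>R w)) has_sum inner (e i) (psi i)) D" if "i < n" for i
    by (rule has_sum_bounded_linear[OF bounded_linear_inner_right rep[OF that]])
  have hg: "(g has_sum T) D"
    unfolding g_def T_def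
    by (rule has_sum_sum_fin) (use hs in auto)
  have pw: "g w \<le> L w * sqrt S" if "w \<in> D" for w
  proof -
    have "g w \<le> (\<Sum>i<n. \<bar>c w i\<bar> * \<bar>inner (e i) w\<bar>)"
      unfolding g_def by (intro sum_mono) (simp add: abs_mult[symmetric])
    also have "\<dots> \<le> L2_set (c w) {..<n} * L2_set (\<lambda>i. inner (e i) w) {..<n}"
      by (rule L2_set_mult_ineq)
    also have "L2_set (\<lambda>i. inner (e i) w) {..<n} \<le> sqrt S"
      unfolding L2_set_def S_def
      by (intro real_sqrt_le_mono cSUP_upper that sup_bdd dict)
    then have "L2_set (c w) {..<n} * L2_set (\<lambda>i. inner (e i) w) {..<n} \<le> L w * sqrt S"
      unfolding L_def L2_set_def by (intro mult_left_mono) (auto intro!: sum_nonneg)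
    finally show ?thesis .
  qed
  have fin: "(\<Sum>w\<in>F. L w) \<le> M" if "finite F" "F \<subseteq> D" for F
  proof -
    have "ennreal (\<Sum>w\<in>F. L w) = (\<Sum>w\<in>F. ennreal (L w))"
      by (rule sum_ennreal[symmetric]) (simp add: L_def sum_nonneg)
    also have "\<dots> = (\<Sum>\<^sub>\<infinity>w\<in>F. ennreal (L w))" using that(1) by simp
    also have "\<dots> \<le> (\<Sum>\<^sub>\<infinity>w\<in>D. ennreal (L w))"
      apply (rule infsum_mono_neutral)
      using that apply auto
      by (rule nonneg_summable_on_complete) simp
    also have "\<dots> \<le> ennreal M" using cM unfolding L_def .
    finally show ?thesis using M by (simp add: ennreal_le_iff)
  qed
  have S0: "S \<ge> 0"
  proof -
    obtain w where w: "w \<in> D" using Dne by blast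
    have "0 \<le> (\<Sum>i<n. (inner (e i) w)\<^sup>2)" by (simp add: sum_nonneg)
    also have "\<dots> \<le> S" unfolding S_def by (intro cSUP_upper w sup_bdd dict)
    finally show ?thesis .
  qed
  have TM: "T \<le> M * sqrt S"
  proof (rule has_sum_le_finite_sums[OF hg])
    fix F assume F: "finite F" "F \<subseteq> D"
    have "sum g F \<le> (\<Sum>w\<in>F. L w * sqrt S)" using F pw by (intro sum_mono) auto
    also have "\<dots> = (\<Sum>w\<in>F. L w) * sqrt S" by (simp add: sum_distrib_right)
    also have "\<dots> \<le> M * sqrt S" using fin[OF F] S0 by (intro mult_right_mono) auto
    finally show "sum g F \<le> M * sqrt S" .
  qed
  have "(\<Sum>i<n. (norm (e i))\<^sup>2) = (\<Sum>i<n. inner (e i) (phi i - psi i) + inner (e i) (psi i))"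
    using orth by (intro sum.cong) (auto simp: inner_diff_right)
  also have "\<dots> = (\<Sum>i<n. inner (e i) (phi i - psi i)) + T" unfolding T_def by (simp add: sum.distrib)
  also have "(\<Sum>i<n. inner (e i) (phi i - psi i)) \<le> (\<Sum>i<n. ((norm (e i))\<^sup>2 + (norm (phi i - psi i))\<^sup>2) / 2)"
  proof (intro sum_mono)
    fix i
    show "inner (e i) (phi i - psi i) \<le> ((norm (e i))\<^sup>2 + (norm (phi i - psi i))\<^sup>2) / 2"
      using two_inner_le[of "e i" "phi i - psi i"] by simp
  qed
  also have "\<dots> = ((\<Sum>i<n. (norm (e i))\<^sup>2) + (\<Sum>i<n. (norm (phi i - psi i))\<^sup>2)) / 2"
    by (simp only: sum_divide_distrib[symmetric] sum.distrib)
  finally have "(\<Sum>i<n. (norm (e i))\<^sup>2) \<le> ((\<Sum>i<n. (norm (e i))\<^sup>2) + (\<Sum>i<n. (norm (phi i - psi i))\<^sup>2)) / 2 + T"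
    by simp
  then have X: "(\<Sum>i<n. (norm (e i))\<^sup>2) - (\<Sum>i<n. (norm (phi i - psi i))\<^sup>2) \<le> 2 * (M * sqrt S)"
    by (rule lin_aux[OF _ TM])
  show ?thesis using X unfolding S_def by (simp add: mult.assoc)
qed



lemma bound_M:
  fixes D :: "'a::{real_inner, complete_space} set"
    and n :: nat and phi psi om :: "nat \<Rightarrow> 'a" and \<kappa> :: real and m :: nat and c :: "'a \<Rightarrow> nat \<Rightarrow> real"
  assumes dict: "dictionary D"
    and k0: "0 < \<kappa>"
    and omp: "collective_omp D \<kappa> n phi om"
    and m1: "m \<ge> 1"
    and rep: "\<And>i. i < n \<Longrightarrow> ((\<lambda>w. c w i *\<^sub>R w) has_sum psi i) D"
    and cM: "(\<Sum>\<^sub>\<infinity>w\<in>D. ennreal (sqrt (\<Sum>i<n. (c w i)\<^sup>2))) \<le> ennreal M" and M: "M \<ge> 0"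
  shows "omp_residual n phi om m \<le> 4 * M\<^sup>2 / \<kappa>\<^sup>2 / real (m + 1) + (\<Sum>i<n. (norm (phi i - psi i))\<^sup>2)"
proof -
  define d2 where "d2 = (\<Sum>i<n. (norm (phi i - psi i))\<^sup>2)"
  define a where "a k = omp_residual n phi om k - d2" for k
  define S where "S k = (SUP w\<in>D. \<Sum>i<n. (inner (phi i - orth_proj (omp_space om k) (phi i)) w)\<^sup>2)" for k
  define A where "A = 4 * M\<^sup>2 / \<kappa>\<^sup>2"
  have A0: "A \<ge> 0" unfolding A_def by simp
  have Ak: "A * \<kappa>\<^sup>2 = 4 * M\<^sup>2" unfolding A_def using k0 by simp
  have Dne: "D \<noteq> {}" using omp unfolding collective_omp_def by auto
  have S0: "S k \<ge> 0" for k
  proof -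
    obtain w where w: "w \<in> D" using Dne by blast
    have "0 \<le> (\<Sum>i<n. (inner (phi i - orth_proj (omp_space om k) (phi i)) w)\<^sup>2)" by (simp add: sum_nonneg)
    also have "\<dots> \<le> S k" unfolding S_def by (intro cSUP_upper w sup_bdd dict)
    finally show ?thesis .
  qed
  have dec: "a (Suc k) \<le> a k - \<kappa>\<^sup>2 * S k" for k
    using omp_dec[OF dict omp, of k] unfolding a_def S_def by simp
  have mono: "a (Suc k) \<le> a k" for k
  proof -
    have "0 \<le> \<kappa>\<^sup>2 * S k" using S0[of k] by simp
    then show ?thesis using dec[of k] by linarith
  qed
  have keyk: "a k \<le> 2 * M * sqrt (S k)" for k
  proof -
    let ?e = "\<lambda>i. phi i - orth_proj (omp_space om k) (phi i)"
    have orth: "inner (?e i) (phi i) = (norm (?e i))\<^sup>2" if "i < n" for i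
    proof -
      have pp: "orth_proj (omp_space om k) (phi i) \<in> omp_space om k"
        "\<forall>w\<in>omp_space om k. inner (?e i) w = 0"
        using proj_props[of "om ` {1..k}" "phi i"] by (simp_all add: omp_space_def)
      have "inner (?e i) (phi i) = inner (?e i) (?e i) + inner (?e i) (orth_proj (omp_space om k) (phi i))"
        by (simp add: inner_diff_right)
      also have "\<dots> = (norm (?e i))\<^sup>2" using pp by (simp add: power2_norm_eq_inner)
      finally show ?thesis .
    qed
    show ?thesis
      using key[OF dict Dne orth rep cM M]
      unfolding a_def S_def d2_def omp_residual_def by simp
  qed
  have step: "A * a (Suc k) \<le> A * a k - (a k)\<^sup>2" if pos: "a k > 0" for k
  proof -
    have "(a k)\<^sup>2 \<le> (2 * M * sqrt (S k))\<^sup>2"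
      using keyk[of k] pos by (intro power_mono) auto
    also have "\<dots> = 4 * M\<^sup>2 * S k" using S0[of k] by (simp add: power_mult_distrib)
    finally have sq: "(a k)\<^sup>2 \<le> 4 * M\<^sup>2 * S k" .
    have "A * a (Suc k) \<le> A * (a k - \<kappa>\<^sup>2 * S k)" using dec[of k] A0 by (rule mult_left_mono)
    also have "\<dots> = A * a k - (A * \<kappa>\<^sup>2) * S k" by (simp add: algebra_simps)
    also have "\<dots> = A * a k - 4 * M\<^sup>2 * S k" using Ak by simp
    finally show ?thesis using sq by linarith
  qed
  obtain m' where m': "m = Suc m'" using m1 by (cases m) auto
  have "a (Suc m') * (real m' + 2) \<le> A"
    by (rule seq_bound[where a=a, OF A0 mono step])
  then have "a m * real (m + 1) \<le> A" using m' by (simp add: add.commute)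
  then have "a m \<le> A / real (m + 1)" by (simp add: field_simps)
  then show ?thesis unfolding a_def A_def d2_def by simp
qed


theorem theorem2:
  fixes D :: "'a::{real_inner, complete_space} set"
    and n :: nat and phi psi om :: "nat \<Rightarrow> 'a" and \<kappa> :: real and m :: nat
  assumes "dictionary D"
    and "\<forall>i<n. \<forall>j<n. inner (phi i) (phi j) = (if i = j then 1 else 0)"
    and "0 < \<kappa>" and "\<kappa> < 1"
    and "collective_omp D \<kappa> n phi om"
    and "l1_dict_norm D n psi < top"
    and "m \<ge> 1"
  shows "omp_residual n phi om m
           \<le> 4 * (enn2real (l1_dict_norm D n psi))\<^sup>2 / \<kappa>\<^sup>2 / real (m + 1)
             + (\<Sum>i<n. (norm (phi i - psi i))\<^sup>2)"
proof -
  define x where "x = enn2real (l1_dict_norm D n psi)"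
  define d2 where "d2 = (\<Sum>i<n. (norm (phi i - psi i))\<^sup>2)"
  define f where "f M = 4 * M\<^sup>2 / \<kappa>\<^sup>2 / real (m + 1) + d2" for M
  have x0: "x \<ge> 0" unfolding x_def by simp
  have bnd: "omp_residual n phi om m \<le> f M" if Mx: "M > x" for M
  proof -
    have M0: "M \<ge> 0" using Mx x0 by simp
    have "l1_dict_norm D n psi = ennreal x" unfolding x_def using assms(6) by simp
    also have "\<dots> < ennreal M" using Mx x0 by (simp add: ennreal_less_iff)
    finally have "l1_dict_norm D n psi < ennreal M" .
    then obtain y where yS: "y \<in> { (\<Sum>\<^sub>\<infinity>w\<in>D. ennreal (sqrt (\<Sum>i<n. (c w i)\<^sup>2))) | c.
       countable {w\<in>D. \<exists>i<n. c w i \<noteq> 0} \<and>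
       (\<forall>i<n. ((\<lambda>w. c w i *\<^sub>R w) has_sum psi i) D) }" and yM: "y < ennreal M"
      unfolding l1_dict_norm_def Inf_less_iff by blast
    then obtain c where yc: "y = (\<Sum>\<^sub>\<infinity>w\<in>D. ennreal (sqrt (\<Sum>i<n. (c w i)\<^sup>2)))"
      and rep: "\<forall>i<n. ((\<lambda>w. c w i *\<^sub>R w) has_sum psi i) D" by blast
    have cM: "(\<Sum>\<^sub>\<infinity>w\<in>D. ennreal (sqrt (\<Sum>i<n. (c w i)\<^sup>2))) \<le> ennreal M"
      using yM yc by simp
    show ?thesis unfolding f_def d2_def
      by (rule bound_M[OF assms(1) assms(3) assms(5) assms(7) _ cM M0]) (use rep in blast)
  qed
  define Mj where "Mj j = x + inverse (real (Suc j))" for j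
  have lim: "(\<lambda>j. f (Mj j)) \<longlonglongrightarrow> f x"
  proof -
    have "Mj \<longlonglongrightarrow> x + 0" unfolding Mj_def
      by (intro tendsto_add tendsto_const LIMSEQ_inverse_real_of_nat)
    then have "Mj \<longlonglongrightarrow> x" by simp
    then show ?thesis unfolding f_def using assms(3) by (intro tendsto_intros) auto
  qed
  have "omp_residual n phi om m \<le> f x"
  proof (rule LIMSEQ_le_const[OF lim])
    show "\<exists>N. \<forall>j\<ge>N. omp_residual n phi om m \<le> f (Mj j)"
      by (intro exI[of _ 0] allI impI bnd) (simp add: Mj_def)
  qed
  then show ?thesis unfolding f_def x_def d2_def .
qed

end
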